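(* Let $d\ge 3$, let $\Delta$ be a shellable simplicial $(d-1)$-sphere, and let $G$ be its facet-ridge graph. Then $G$ has a good acyclic orientation.
   Context: $\Delta$ is a simplicial complex whose geometric realization is homeomorphic to the $(d-1)$-sphere; its facets are its maximal faces ($d$ elements each), and ridges are faces with $d-1$ elements. The facet-ridge graph $G$ has the facets as vertices, two facets adjacent iff they share a ridge. Shelling: a total ordering $T_1,\dots,T_n$ of the facets such that for each $2\le i\le n$, $\overline{T}_i\cap(\overline{T}_1\cup\cdots\cup\overline{T}_{i-1})$ is pure $(d-2)$-dimensional, where $\overline{T}$ is the set of all subsets of $T$; $\Delta$ is shellable if a shelling exists. For $0\le k\le d$ and a face $\sigma$ of dimension $d-k-1$ (i.e., $|\sigma|=d-k$; the empty face has dimension $-1$), let $\mathcal{V}^\Delta_k(\sigma)$ be the set of vertices of $G$ corresponding to facets of $\Delta$ containing $\sigma$, and $G[W]$ the induced subgraph on $W$. An orientation $\mathcal{O}$ of $G$ is good if for every $0\le k\le d$ and every $(d-k-1)$-dimensional face $\sigma$, the orientation induced by $\mathcal{O}$ on $G[\mathcal{V}^\Delta_k(\sigma)]$ has exactly one sink (vertex with no outgoing edge within that subgraph). It is acyclic if it has no directed cycle. *)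

theory Defs
  imports "HOL-Analysis.Analysis"
begin

definition simplicial_complex :: "'a set set \<Rightarrow> bool" where
  "simplicial_complex \<Delta> \<longleftrightarrow> finite \<Delta> \<and> \<Delta> \<noteq> {} \<and> (\<forall>F\<in>\<Delta>. finite F) \<and>
     (\<forall>F\<in>\<Delta>. \<forall>G. G \<subseteq> F \<longrightarrow> G \<in> \<Delta>)"

definition geometric_realization :: "'a set set \<Rightarrow> ('a \<Rightarrow> real) set" where
  "geometric_realization \<Delta> = {x. \<exists>\<sigma>\<in>\<Delta>. (\<forall>v. v \<notin> \<sigma> \<longrightarrow> x v = 0) \<and> (\<forall>v. 0 \<le> x v) \<and> (\<Sum>v\<in>\<sigma>. x v) = 1}"

definition realization_topology :: "'a set set \<Rightarrow> ('a \<Rightarrow> real) topology" where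
  "realization_topology \<Delta> = subtopology (product_topology (\<lambda>i. euclideanreal) UNIV) (geometric_realization \<Delta>)"

definition simplicial_sphere :: "'a set set \<Rightarrow> nat \<Rightarrow> bool" where
  "simplicial_sphere \<Delta> d \<longleftrightarrow> simplicial_complex \<Delta> \<and> 1 \<le> d \<and>
     realization_topology \<Delta> homeomorphic_space nsphere (d - 1)"

definition facets :: "'a set set \<Rightarrow> 'a set set" where
  "facets \<Delta> = {F\<in>\<Delta>. \<forall>G\<in>\<Delta>. F \<subseteq> G \<longrightarrow> G = F}"

text \<open>A complex K is pure of dimension k: all its maximal faces have k+1 elements
  (here stated with the number of elements m = k+1).\<close>
definition pure_card :: "'a set set \<Rightarrow> nat \<Rightarrow> bool" where
  "pure_card K m \<longleftrightarrow> (\<forall>F\<in>facets K. card F = m)"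

definition shelling :: "'a set set \<Rightarrow> nat \<Rightarrow> 'a set list \<Rightarrow> bool" where
  "shelling \<Delta> d ts \<longleftrightarrow> distinct ts \<and> set ts = facets \<Delta> \<and>
     (\<forall>i. 1 \<le> i \<and> i < length ts \<longrightarrow>
        pure_card (Pow (ts ! i) \<inter> (\<Union>j<i. Pow (ts ! j))) (d - 1))"

definition shellable :: "'a set set \<Rightarrow> nat \<Rightarrow> bool" where
  "shellable \<Delta> d \<longleftrightarrow> (\<exists>ts. shelling \<Delta> d ts)"

definition fr_adj :: "'a set set \<Rightarrow> nat \<Rightarrow> 'a set \<Rightarrow> 'a set \<Rightarrow> bool" where
  "fr_adj \<Delta> d F F' \<longleftrightarrow> F \<in> facets \<Delta> \<and> F' \<in> facets \<Delta> \<and> F \<noteq> F' \<and>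
     (\<exists>R\<in>\<Delta>. card R = d - 1 \<and> R \<subseteq> F \<and> R \<subseteq> F')"

definition orientation :: "'a set set \<Rightarrow> nat \<Rightarrow> ('a set \<times> 'a set) set \<Rightarrow> bool" where
  "orientation \<Delta> d Ori \<longleftrightarrow> (\<forall>(F,F')\<in>Ori. fr_adj \<Delta> d F F') \<and>
     (\<forall>F F'. fr_adj \<Delta> d F F' \<longrightarrow> ((F,F') \<in> Ori \<longleftrightarrow> (F',F) \<notin> Ori))"

definition star_facets :: "'a set set \<Rightarrow> 'a set \<Rightarrow> 'a set set" where
  "star_facets \<Delta> \<sigma> = {F\<in>facets \<Delta>. \<sigma> \<subseteq> F}"

definition good_orientation :: "'a set set \<Rightarrow> nat \<Rightarrow> ('a set \<times> 'a set) set \<Rightarrow> bool" where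
  "good_orientation \<Delta> d Ori \<longleftrightarrow> orientation \<Delta> d Ori \<and>
     (\<forall>k\<le>d. \<forall>\<sigma>\<in>\<Delta>. card \<sigma> = d - k \<longrightarrow>
        (\<exists>!F. F \<in> star_facets \<Delta> \<sigma> \<and> (\<forall>F'\<in>star_facets \<Delta> \<sigma>. (F,F') \<notin> Ori)))"

end

theory Submission
  imports Defs
begin

lemma facet_above:
  assumes "simplicial_complex \<Delta>" "\<sigma> \<in> \<Delta>"
  shows "\<exists>F\<in>facets \<Delta>. \<sigma> \<subseteq> F"
proof -
  have "finite \<Delta>" using assms(1) unfolding simplicial_complex_def by blast
  then obtain m where m: "m \<in> \<Delta>" "\<sigma> \<subseteq> m" "\<forall>b\<in>\<Delta>. m \<subseteq> b \<longrightarrow> m = b"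
    using finite_has_maximal2[of \<Delta> \<sigma>] assms(2) by blast
  then show ?thesis unfolding facets_def by blast
qed

lemma shelling_good:
  assumes sc: "simplicial_complex \<Delta>" and sh: "shelling \<Delta> d ts"
  shows "\<exists>Ori. good_orientation \<Delta> d Ori \<and> acyclic Ori"
proof -
  let ?n = "length ts"
  have dist: "distinct ts" and setts: "set ts = facets \<Delta>"
    and pure: "\<And>i. 1 \<le> i \<Longrightarrow> i < ?n \<Longrightarrow>
        pure_card (Pow (ts ! i) \<inter> (\<Union>j<i. Pow (ts ! j))) (d - 1)"
    using sh unfolding shelling_def by auto
  have fin: "\<forall>F\<in>\<Delta>. finite F" and dc: "\<forall>F\<in>\<Delta>. \<forall>G. G \<subseteq> F \<longrightarrow> G \<in> \<Delta>"
    using sc unfolding simplicial_complex_def by auto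
  have facD: "F \<in> facets \<Delta> \<Longrightarrow> F \<in> \<Delta>" for F unfolding facets_def by blast
  have facI: "\<exists>i<?n. F = ts ! i" if "F \<in> facets \<Delta>" for F
    using that setts by (metis in_set_conv_nth)
  have tsfac: "i < ?n \<Longrightarrow> ts ! i \<in> facets \<Delta>" for i using setts by auto
  define Ori where "Ori = {(ts ! j, ts ! i) | i j. i < j \<and> j < ?n \<and> fr_adj \<Delta> d (ts ! j) (ts ! i)}"
  have OriD: "(F, F') \<in> Ori \<longleftrightarrow> (\<exists>i j. i < j \<and> j < ?n \<and> F = ts ! j \<and> F' = ts ! i \<and> fr_adj \<Delta> d F F')"
    for F F' unfolding Ori_def by blast
  have idx: "ts ! i = ts ! j \<longleftrightarrow> i = j" if "i < ?n" "j < ?n" for i j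
    using nth_eq_iff_index_eq[OF dist that] .
  have sym: "fr_adj \<Delta> d F F' \<Longrightarrow> fr_adj \<Delta> d F' F" for F F'
    unfolding fr_adj_def by blast
  have ori: "orientation \<Delta> d Ori"
    unfolding orientation_def
  proof (intro conjI allI impI)
    show "\<forall>(F, F')\<in>Ori. fr_adj \<Delta> d F F'" using OriD by blast
  next
    fix F F' assume a: "fr_adj \<Delta> d F F'"
    then have "F \<in> facets \<Delta>" "F' \<in> facets \<Delta>" "F \<noteq> F'" unfolding fr_adj_def by auto
    then obtain i j where ij: "i < ?n" "j < ?n" "F = ts ! j" "F' = ts ! i" "i \<noteq> j"
      using facI by blast
    show "((F, F') \<in> Ori) = ((F', F) \<notin> Ori)"
    proof
      assume "(F, F') \<in> Ori"
      then obtain i' j' where "i' < j'" "j' < ?n" "F = ts ! j'" "F' = ts ! i'" using OriD by blast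
      then have "i' = i" "j' = j" using ij idx by (metis order.strict_trans)+
      then show "(F', F) \<notin> Ori" using OriD ij idx \<open>i' < j'\<close>
        by (metis less_asym order.strict_trans)
    next
      assume "(F', F) \<notin> Ori"
      then have "\<not> j < i" using OriD ij sym a by blast
      then have "i < j" using ij by simp
      then show "(F, F') \<in> Ori" using OriD ij a by blast
    qed
  qed
  have lt: "(x, y) \<in> Ori\<^sup>+ \<Longrightarrow> \<exists>i j. i < j \<and> j < ?n \<and> x = ts ! j \<and> y = ts ! i" for x y
  proof (induction rule: trancl_induct)
    case (base y) then show ?case using OriD by blast
  next
    case (step y z)
    then obtain i j where a: "i < j" "j < ?n" "x = ts ! j" "y = ts ! i" by blast
    from step obtain i' j' where b: "i' < j'" "j' < ?n" "y = ts ! j'" "z = ts ! i'" using OriD by blast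
    have "i = j'" using a b idx by (metis order.strict_trans)
    then show ?case using a b by (metis order.strict_trans)
  qed
  have acyc: "acyclic Ori"
    unfolding acyclic_def
  proof
    fix x show "(x, x) \<notin> Ori\<^sup>+"
    proof
      assume "(x, x) \<in> Ori\<^sup>+"
      then obtain i j where "i < j" "j < ?n" "x = ts ! j" "x = ts ! i" using lt by blast
      then show False using idx by (metis order.strict_trans less_irrefl)
    qed
  qed
  have good: "\<exists>!F. F \<in> star_facets \<Delta> \<sigma> \<and> (\<forall>F'\<in>star_facets \<Delta> \<sigma>. (F,F') \<notin> Ori)"
    if s: "\<sigma> \<in> \<Delta>" for \<sigma>
  proof -
    obtain F where "F \<in> facets \<Delta>" "\<sigma> \<subseteq> F" using facet_above[OF sc s] by blast
    then obtain i where "i < ?n" "\<sigma> \<subseteq> ts ! i" using facI by blast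
    define i0 where "i0 = (LEAST i. i < ?n \<and> \<sigma> \<subseteq> ts ! i)"
    have "i < ?n \<and> \<sigma> \<subseteq> ts ! i" using \<open>i < ?n\<close> \<open>\<sigma> \<subseteq> ts ! i\<close> by blast
    then have i0: "i0 < ?n" "\<sigma> \<subseteq> ts ! i0"
      using LeastI[of "\<lambda>i. i < ?n \<and> \<sigma> \<subseteq> ts ! i"]
      unfolding i0_def by auto
    have i0min: "k < ?n \<Longrightarrow> \<sigma> \<subseteq> ts ! k \<Longrightarrow> i0 \<le> k" for k
      unfolding i0_def by (simp add: Least_le)
    have st: "F \<in> star_facets \<Delta> \<sigma> \<longleftrightarrow> (\<exists>k<?n. F = ts ! k \<and> \<sigma> \<subseteq> ts ! k)" for F
      unfolding star_facets_def using facI tsfac by auto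
    have sink0: "\<forall>F'\<in>star_facets \<Delta> \<sigma>. (ts ! i0, F') \<notin> Ori"
    proof
      fix F' assume "F' \<in> star_facets \<Delta> \<sigma>"
      then obtain k where k: "k < ?n" "F' = ts ! k" "\<sigma> \<subseteq> ts ! k" using st by blast
      show "(ts ! i0, F') \<notin> Ori"
      proof
        assume "(ts ! i0, F') \<in> Ori"
        then obtain a b where "a < b" "b < ?n" "ts ! i0 = ts ! b" "F' = ts ! a" using OriD by blast
        then have "b = i0" "a = k" using idx i0 k by (metis order.strict_trans)+
        then show False using i0min k \<open>a < b\<close> by fastforce
      qed
    qed
    have uniq: "F = ts ! i0" if F: "F \<in> star_facets \<Delta> \<sigma>" "\<forall>F'\<in>star_facets \<Delta> \<sigma>. (F,F') \<notin> Ori" for F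
    proof (rule ccontr)
      assume ne: "F \<noteq> ts ! i0"
      from F obtain j where j: "j < ?n" "F = ts ! j" "\<sigma> \<subseteq> ts ! j" using st by blast
      have "i0 \<le> j" using i0min j by blast
      with ne j have ij: "i0 < j" by (metis le_neq_implies_less)
      define K where "K = Pow (ts ! j) \<inter> (\<Union>i<j. Pow (ts ! i))"
      have pc: "pure_card K (d - 1)" unfolding K_def using pure ij j by simp
      have sK: "\<sigma> \<in> K" unfolding K_def using ij i0 j by auto
      have finK: "finite K" unfolding K_def
        using fin facD tsfac j by (meson finite_Int finite_Pow_iff)
      obtain M where M: "M \<in> K" "\<sigma> \<subseteq> M" "\<forall>b\<in>K. M \<subseteq> b \<longrightarrow> M = b"
        using finite_has_maximal2[OF finK sK] by blast
      have "M \<in> facets K" using M unfolding facets_def by blast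
      then have cM: "card M = d - 1" using pc unfolding pure_card_def by blast
      from M(1) obtain i where i: "i < j" "M \<subseteq> ts ! i" "M \<subseteq> ts ! j" unfolding K_def by blast
      have MD: "M \<in> \<Delta>" using dc facD tsfac j i by blast
      have nij: "ts ! i \<noteq> ts ! j" using idx i j by (metis order.strict_trans less_irrefl)
      have adj: "fr_adj \<Delta> d (ts ! j) (ts ! i)"
        unfolding fr_adj_def using tsfac i j nij MD cM by (metis order.strict_trans)
      have "(F, ts ! i) \<in> Ori" using OriD adj i j by blast
      moreover have "ts ! i \<in> star_facets \<Delta> \<sigma>" proof -
        have "i < ?n" using i j by simp
        moreover have "\<sigma> \<subseteq> ts ! i" using i M by blast
        ultimately show ?thesis using st by blast
      qed
      ultimately show False using F by blast
    qed
    have "ts ! i0 \<in> star_facets \<Delta> \<sigma>" using st i0 by blast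
    then show ?thesis using sink0 uniq by blast
  qed
  have "good_orientation \<Delta> d Ori"
    unfolding good_orientation_def using ori good by blast
  then show ?thesis using acyc by blast
qed

theorem proposition3p1:
  fixes \<Delta> :: "'a set set" and d :: nat
  assumes "3 \<le> d"
    and "simplicial_sphere \<Delta> d"
    and "shellable \<Delta> d"
  shows "\<exists>Ori. good_orientation \<Delta> d Ori \<and> acyclic Ori"
proof -
  have "simplicial_complex \<Delta>" using assms(2) unfolding simplicial_sphere_def by blast
  moreover obtain ts where "shelling \<Delta> d ts" using assms(3) unfolding shellable_def by blast
  ultimately show ?thesis using shelling_good by blast
qed

end
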